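(* Let $\mathsf{S}$ be the algebra antihomomorphism of $U_{K,L,twist}$ determined by $\mathsf{S}(K)=\overline{K}$, $\mathsf{S}(\overline{K})=K$, $\mathsf{S}(L)=\overline{L}$, $\mathsf{S}(\overline{L})=L$, $\mathsf{S}(E)=-E(\overline{K}+\overline{L})$, $\mathsf{S}(F)=-(K+L)F$. Then for every $X\in U_{K,L,twist}$, $(\mathsf{id}\star\mathsf{S})(X)=(\mathsf{S}\star\mathsf{id})(X)=\varepsilon(X)\mathbf{1}$.
   Context: Fix $q\in\mathbb{C}$, $q\neq 0,\pm1$. $U_{K,L,twist}$ is the unital associative $\mathbb{C}$-algebra generated by $K,\overline{K},L,\overline{L},E,F$ subject to $K\overline{K}K=K$, $\overline{K}K\overline{K}=\overline{K}$, $K\overline{K}=\overline{K}K$, $L\overline{L}L=L$, $\overline{L}L\overline{L}=\overline{L}$, $L\overline{L}=\overline{L}L$, $K\overline{K}+L\overline{L}=\mathbf{1}$, $KE=q^2EL$, $LE=q^2EK$, $\overline{K}E=q^{-2}E\overline{L}$, $\overline{L}E=q^{-2}E\overline{K}$, $KF=q^{-2}FL$, $LF=q^{-2}FK$, $\overline{K}F=q^2F\overline{L}$, $\overline{L}F=q^2F\overline{K}$, $EF-FE=\frac{(K+L)-(\overline{K}+\overline{L})}{q-q^{-1}}$. It is a bialgebra with the algebra homomorphisms $\Delta,\varepsilon$ determined by $\Delta(K)=K\otimes K+L\otimes L$, $\Delta(\overline{K})=\overline{K}\otimes\overline{K}+\overline{L}\otimes\overline{L}$, $\Delta(L)=L\otimes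 K+K\otimes L$, $\Delta(\overline{L})=\overline{L}\otimes\overline{K}+\overline{K}\otimes\overline{L}$, $\Delta(E)=\mathbf{1}\otimes E+E\otimes(K+L)$, $\Delta(F)=F\otimes\mathbf{1}+(\overline{K}+\overline{L})\otimes F$, $\varepsilon(K)=\varepsilon(\overline{K})=1$, $\varepsilon(L)=\varepsilon(\overline{L})=\varepsilon(E)=\varepsilon(F)=0$. For linear maps $A,B$ of $U_{K,L,twist}$, the convolution is $A\star B=\mu\circ(A\otimes B)\circ\Delta$, where $\mu$ is the multiplication. *)

theory Defs
  imports Complex_Main
begin

text \<open>Elements of the free unital associative complex algebra are represented by
  syntax trees; the algebra U is the quotient of these trees by the smallest
  congruence (eqU q) containing the axioms of a unital associative C-algebra
  and the defining relations. Sc c stands for c times the unit.\<close>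

datatype gen = GK | GKb | GL | GLb | GE | GF

datatype uexpr = Gen gen | Sc complex | Add uexpr uexpr | Mul uexpr uexpr

abbreviation "uK \<equiv> Gen GK"
abbreviation "uKb \<equiv> Gen GKb"
abbreviation "uL \<equiv> Gen GL"
abbreviation "uLb \<equiv> Gen GLb"
abbreviation "uE \<equiv> Gen GE"
abbreviation "uF \<equiv> Gen GF"
abbreviation "uone \<equiv> Sc 1"

definition smul :: "complex \<Rightarrow> uexpr \<Rightarrow> uexpr" where
  "smul c x = Mul (Sc c) x"

definition uneg :: "uexpr \<Rightarrow> uexpr" where
  "uneg x = smul (-1) x"

definition usub :: "uexpr \<Rightarrow> uexpr \<Rightarrow> uexpr" where
  "usub x y = Add x (uneg y)"

inductive eqU :: "complex \<Rightarrow> uexpr \<Rightarrow> uexpr \<Rightarrow> bool" for q :: complex where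
  refl: "eqU q x x"
| sym: "eqU q x y \<Longrightarrow> eqU q y x"
| trans: "eqU q x y \<Longrightarrow> eqU q y z \<Longrightarrow> eqU q x z"
| add_cong: "eqU q x x' \<Longrightarrow> eqU q y y' \<Longrightarrow> eqU q (Add x y) (Add x' y')"
| mul_cong: "eqU q x x' \<Longrightarrow> eqU q y y' \<Longrightarrow> eqU q (Mul x y) (Mul x' y')"
| add_assoc: "eqU q (Add (Add x y) z) (Add x (Add y z))"
| add_comm: "eqU q (Add x y) (Add y x)"
| add_zero: "eqU q (Add (Sc 0) x) x"
| add_inv: "eqU q (Add x (Mul (Sc (-1)) x)) (Sc 0)"
| mul_assoc: "eqU q (Mul (Mul x y) z) (Mul x (Mul y z))"
| mul_one_left: "eqU q (Mul (Sc 1) x) x"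
| mul_one_right: "eqU q (Mul x (Sc 1)) x"
| distrib_left: "eqU q (Mul x (Add y z)) (Add (Mul x y) (Mul x z))"
| distrib_right: "eqU q (Mul (Add x y) z) (Add (Mul x z) (Mul y z))"
| sc_central: "eqU q (Mul (Sc c) x) (Mul x (Sc c))"
| sc_add: "eqU q (Add (Sc a) (Sc b)) (Sc (a + b))"
| sc_mul: "eqU q (Mul (Sc a) (Sc b)) (Sc (a * b))"
| r1: "eqU q (Mul (Mul uK uKb) uK) uK"
| r2: "eqU q (Mul (Mul uKb uK) uKb) uKb"
| r3: "eqU q (Mul uK uKb) (Mul uKb uK)"
| r4: "eqU q (Mul (Mul uL uLb) uL) uL"
| r5: "eqU q (Mul (Mul uLb uL) uLb) uLb"
| r6: "eqU q (Mul uL uLb) (Mul uLb uL)"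
| r7: "eqU q (Add (Mul uK uKb) (Mul uL uLb)) uone"
| r8: "eqU q (Mul uK uE) (smul (q^2) (Mul uE uL))"
| r9: "eqU q (Mul uL uE) (smul (q^2) (Mul uE uK))"
| r10: "eqU q (Mul uKb uE) (smul (inverse (q^2)) (Mul uE uLb))"
| r11: "eqU q (Mul uLb uE) (smul (inverse (q^2)) (Mul uE uKb))"
| r12: "eqU q (Mul uK uF) (smul (inverse (q^2)) (Mul uF uL))"
| r13: "eqU q (Mul uL uF) (smul (inverse (q^2)) (Mul uF uK))"
| r14: "eqU q (Mul uKb uF) (smul (q^2) (Mul uF uLb))"
| r15: "eqU q (Mul uLb uF) (smul (q^2) (Mul uF uKb))"
| r16: "eqU q (usub (Mul uE uF) (Mul uF uE))
          (smul (inverse (q - inverse q)) (usub (Add uK uL) (Add uKb uLb)))"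

text \<open>Coproduct, lifted to the free algebra; the value is a formal sum of
  simple tensors a \<otimes> b, represented as a list of pairs.\<close>

fun delta_gen :: "gen \<Rightarrow> (uexpr \<times> uexpr) list" where
  "delta_gen GK = [(uK, uK), (uL, uL)]"
| "delta_gen GKb = [(uKb, uKb), (uLb, uLb)]"
| "delta_gen GL = [(uL, uK), (uK, uL)]"
| "delta_gen GLb = [(uLb, uKb), (uKb, uLb)]"
| "delta_gen GE = [(uone, uE), (uE, Add uK uL)]"
| "delta_gen GF = [(uF, uone), (Add uKb uLb, uF)]"

fun delta :: "uexpr \<Rightarrow> (uexpr \<times> uexpr) list" where
  "delta (Gen g) = delta_gen g"
| "delta (Sc c) = [(Sc c, uone)]"
| "delta (Add a b) = delta a @ delta b"
| "delta (Mul a b) = [(Mul x1 x2, Mul y1 y2). (x1, y1) \<leftarrow> delta a, (x2, y2) \<leftarrow> delta b]"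

fun eps_gen :: "gen \<Rightarrow> complex" where
  "eps_gen GK = 1" | "eps_gen GKb = 1" | "eps_gen GL = 0" | "eps_gen GLb = 0"
| "eps_gen GE = 0" | "eps_gen GF = 0"

fun eps :: "uexpr \<Rightarrow> complex" where
  "eps (Gen g) = eps_gen g"
| "eps (Sc c) = c"
| "eps (Add a b) = eps a + eps b"
| "eps (Mul a b) = eps a * eps b"

fun S_gen :: "gen \<Rightarrow> uexpr" where
  "S_gen GK = uKb" | "S_gen GKb = uK" | "S_gen GL = uLb" | "S_gen GLb = uL"
| "S_gen GE = uneg (Mul uE (Add uKb uLb))"
| "S_gen GF = uneg (Mul (Add uK uL) uF)"

fun antipode :: "uexpr \<Rightarrow> uexpr" where
  "antipode (Gen g) = S_gen g"
| "antipode (Sc c) = Sc c"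
| "antipode (Add a b) = Add (antipode a) (antipode b)"
| "antipode (Mul a b) = Mul (antipode b) (antipode a)"

definition usum :: "uexpr list \<Rightarrow> uexpr" where
  "usum xs = foldr Add xs (Sc 0)"

definition conv_id_S :: "uexpr \<Rightarrow> uexpr" where
  "conv_id_S x = usum [Mul a (antipode b). (a, b) \<leftarrow> delta x]"

definition conv_S_id :: "uexpr \<Rightarrow> uexpr" where
  "conv_S_id x = usum [Mul (antipode a) b. (a, b) \<leftarrow> delta x]"

end

theory Submission
  imports Defs
begin

context fixes q :: complex begin

abbreviation eqq (infix "\<approx>" 50) where "x \<approx> y \<equiv> eqU q x y"

lemma usum_Nil[simp]: "usum [] = Sc 0" by (simp add: usum_def)
lemma usum_Cons[simp]: "usum (x # xs) = Add x (usum xs)" by (simp add: usum_def)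

lemma e_refl[simp]: "x \<approx> x" by (rule eqU.refl)
lemma e_sym: "x \<approx> y \<Longrightarrow> y \<approx> x" by (rule eqU.sym)
lemma e_trans[trans]: "x \<approx> y \<Longrightarrow> y \<approx> z \<Longrightarrow> x \<approx> z" by (rule eqU.trans)
lemma addL: "x \<approx> x' \<Longrightarrow> Add x y \<approx> Add x' y" by (rule eqU.add_cong) auto
lemma addR: "y \<approx> y' \<Longrightarrow> Add x y \<approx> Add x y'" by (rule eqU.add_cong) auto
lemma mulL: "x \<approx> x' \<Longrightarrow> Mul x y \<approx> Mul x' y" by (rule eqU.mul_cong) auto
lemma mulR: "y \<approx> y' \<Longrightarrow> Mul x y \<approx> Mul x y'" by (rule eqU.mul_cong) auto

lemma add_zero_r: "Add x (Sc 0) \<approx> x"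
  by (rule e_trans[OF eqU.add_comm eqU.add_zero])

lemma cancel: assumes "Add x y \<approx> y" shows "x \<approx> Sc 0"
proof -
  have "x \<approx> Add x (Sc 0)" by (rule e_sym[OF add_zero_r])
  also have "\<dots> \<approx> Add x (Add y (Mul (Sc (-1)) y))" by (rule addR, rule e_sym, rule eqU.add_inv)
  also have "\<dots> \<approx> Add (Add x y) (Mul (Sc (-1)) y)" by (rule e_sym, rule eqU.add_assoc)
  also have "\<dots> \<approx> Add y (Mul (Sc (-1)) y)" by (rule addL, rule assms)
  also have "\<dots> \<approx> Sc 0" by (rule eqU.add_inv)
  finally show ?thesis .
qed

lemma mul_zero_l: "Mul (Sc 0) x \<approx> Sc 0"
proof (rule cancel)
  have "Add (Sc 0) (Sc 0) \<approx> Sc 0" using eqU.sc_add[of q 0 0] by simp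
  hence "Mul (Add (Sc 0) (Sc 0)) x \<approx> Mul (Sc 0) x" by (rule mulL)
  thus "Add (Mul (Sc 0) x) (Mul (Sc 0) x) \<approx> Mul (Sc 0) x"
    using e_trans[OF e_sym[OF eqU.distrib_right]] by blast
qed

lemma mul_zero_r: "Mul x (Sc 0) \<approx> Sc 0"
  by (rule e_trans[OF e_sym[OF eqU.sc_central] mul_zero_l])

lemma sc_pull_r: "Mul x (Mul (Sc c) y) \<approx> Mul (Sc c) (Mul x y)"
proof -
  have "Mul x (Mul (Sc c) y) \<approx> Mul (Mul x (Sc c)) y" by (rule e_sym, rule eqU.mul_assoc)
  also have "\<dots> \<approx> Mul (Mul (Sc c) x) y" by (rule mulL, rule e_sym, rule eqU.sc_central)
  also have "\<dots> \<approx> Mul (Sc c) (Mul x y)" by (rule eqU.mul_assoc)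
  finally show ?thesis .
qed

lemma neg_cancel: "Add (Mul (Sc (-1)) x) x \<approx> Sc 0"
  by (rule e_trans[OF eqU.add_comm eqU.add_inv])

lemma add_swap4: "Add (Add a b) (Add c d) \<approx> Add (Add a c) (Add b d)"
proof -
  have "Add (Add a b) (Add c d) \<approx> Add a (Add b (Add c d))" by (rule eqU.add_assoc)
  also have "\<dots> \<approx> Add a (Add (Add b c) d)" by (rule addR, rule e_sym, rule eqU.add_assoc)
  also have "\<dots> \<approx> Add a (Add (Add c b) d)" by (rule addR, rule addL, rule eqU.add_comm)
  also have "\<dots> \<approx> Add a (Add c (Add b d))" by (rule addR, rule eqU.add_assoc)
  also have "\<dots> \<approx> Add (Add a c) (Add b d)" by (rule e_sym, rule eqU.add_assoc)
  finally show ?thesis .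
qed

lemma usum_append: "usum (xs @ ys) \<approx> Add (usum xs) (usum ys)"
proof (induction xs)
  case Nil then show ?case by (simp add: usum_Cons e_sym[OF eqU.add_zero])
next
  case (Cons x xs)
  have "usum ((x # xs) @ ys) = Add x (usum (xs @ ys))" by (simp add: usum_Cons)
  also have "\<dots> \<approx> Add x (Add (usum xs) (usum ys))" by (rule addR, rule Cons)
  also have "\<dots> \<approx> Add (Add x (usum xs)) (usum ys)" by (rule e_sym, rule eqU.add_assoc)
  finally show ?case by (simp add: usum_Cons)
qed

lemma usum_concat: "usum (concat xss) \<approx> usum (map usum xss)"
proof (induction xss)
  case Nil then show ?case by (simp add: usum_Cons)
next
  case (Cons xs xss)
  have "usum (concat (xs # xss)) \<approx> Add (usum xs) (usum (concat xss))" by (simp add: usum_append)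
  also have "\<dots> \<approx> Add (usum xs) (usum (map usum xss))" by (rule addR, rule Cons)
  finally show ?case by (simp add: usum_Cons)
qed

lemma usum_cong: "(\<And>z. z \<in> set L \<Longrightarrow> f z \<approx> g z) \<Longrightarrow> usum (map f L) \<approx> usum (map g L)"
proof (induction L)
  case Nil then show ?case by (simp add: usum_Cons)
next
  case (Cons a L)
  then show ?case by (simp add: usum_Cons, intro eqU.add_cong, auto simp: usum_Cons)
qed

lemma usum_lin: "usum (map (\<lambda>z. Mul (Mul u (h z)) w) D) \<approx> Mul (Mul u (usum (map h D))) w"
proof (induction D)
  case Nil
  have "Mul (Mul u (Sc 0)) w \<approx> Mul (Sc 0) w" by (rule mulL, rule mul_zero_r)
  also have "\<dots> \<approx> Sc 0" by (rule mul_zero_l)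
  finally show ?case by (simp add: usum_Cons e_sym)
next
  case (Cons a D)
  have "usum (map (\<lambda>z. Mul (Mul u (h z)) w) (a # D)) = Add (Mul (Mul u (h a)) w) (usum (map (\<lambda>z. Mul (Mul u (h z)) w) D))"
    by (simp add: usum_Cons)
  also have "\<dots> \<approx> Add (Mul (Mul u (h a)) w) (Mul (Mul u (usum (map h D))) w)" by (rule addR, rule Cons)
  also have "\<dots> \<approx> Mul (Add (Mul u (h a)) (Mul u (usum (map h D)))) w" by (rule e_sym, rule eqU.distrib_right)
  also have "\<dots> \<approx> Mul (Mul u (Add (h a) (usum (map h D)))) w" by (rule mulL, rule e_sym, rule eqU.distrib_left)
  finally show ?case by (simp add: usum_Cons)
qed

lemma usum_zeros: "usum (map (\<lambda>_. Sc 0) B) \<approx> Sc 0"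
proof (induction B)
  case Nil then show ?case by (simp add: usum_Cons)
next
  case (Cons a B)
  have "Add (Sc 0) (usum (map (\<lambda>_. Sc 0) B)) \<approx> usum (map (\<lambda>_. Sc 0) B)" by (rule eqU.add_zero)
  also have "\<dots> \<approx> Sc 0" by (rule Cons)
  finally show ?case by (simp add: usum_Cons)
qed

lemma usum_add_map: "Add (usum (map f B)) (usum (map h B)) \<approx> usum (map (\<lambda>w. Add (f w) (h w)) B)"
proof (induction B)
  case Nil then show ?case using eqU.add_zero[of q "Sc 0"] by (simp add: usum_Cons)
next
  case (Cons a B)
  have "Add (usum (map f (a#B))) (usum (map h (a#B))) = Add (Add (f a) (usum (map f B))) (Add (h a) (usum (map h B)))"
    by (simp add: usum_Cons)
  also have "\<dots> \<approx> Add (Add (f a) (h a)) (Add (usum (map f B)) (usum (map h B)))" by (rule add_swap4)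
  also have "\<dots> \<approx> Add (Add (f a) (h a)) (usum (map (\<lambda>w. Add (f w) (h w)) B))" by (rule addR, rule Cons)
  finally show ?case by (simp add: usum_Cons)
qed

lemma usum_swap: "usum (map (\<lambda>z. usum (map (g z) B)) A) \<approx> usum (map (\<lambda>w. usum (map (\<lambda>z. g z w) A)) B)"
proof (induction A)
  case Nil then show ?case by (simp add: usum_Cons e_sym[OF usum_zeros])
next
  case (Cons a A)
  have "usum (map (\<lambda>z. usum (map (g z) B)) (a # A)) = Add (usum (map (g a) B)) (usum (map (\<lambda>z. usum (map (g z) B)) A))"
    by (simp add: usum_Cons)
  also have "\<dots> \<approx> Add (usum (map (g a) B)) (usum (map (\<lambda>w. usum (map (\<lambda>z. g z w) A)) B))" by (rule addR, rule Cons)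
  also have "\<dots> \<approx> usum (map (\<lambda>w. Add (g a w) (usum (map (\<lambda>z. g z w) A))) B)" by (rule usum_add_map)
  finally show ?case by (simp add: usum_Cons)
qed


lemma usum_smul: "usum (map (\<lambda>z. Mul (Sc c) (h z)) D) \<approx> Mul (Sc c) (usum (map h D))"
proof -
  have "usum (map (\<lambda>z. Mul (Sc c) (h z)) D) \<approx> usum (map (\<lambda>z. Mul (Mul (Sc c) (h z)) (Sc 1)) D)"
    by (rule usum_cong, rule e_sym, rule eqU.mul_one_right)
  also have "\<dots> \<approx> Mul (Mul (Sc c) (usum (map h D))) (Sc 1)" by (rule usum_lin)
  also have "\<dots> \<approx> Mul (Sc c) (usum (map h D))" by (rule eqU.mul_one_right)
  finally show ?thesis .
qed

lemma assoc4: "Mul (Mul a b) (Mul c d) \<approx> Mul (Mul a (Mul b c)) d"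
proof -
  have "Mul (Mul a b) (Mul c d) \<approx> Mul (Mul (Mul a b) c) d" by (rule e_sym, rule eqU.mul_assoc)
  also have "\<dots> \<approx> Mul (Mul a (Mul b c)) d" by (rule mulL, rule eqU.mul_assoc)
  finally show ?thesis .
qed

lemma sc_mid: "x' \<approx> Sc c \<Longrightarrow> Mul (Mul a x') d \<approx> Mul (Sc c) (Mul a d)"
proof -
  assume h: "x' \<approx> Sc c"
  have "Mul (Mul a x') d \<approx> Mul (Mul a (Sc c)) d" by (rule mulL, rule mulR, rule h)
  also have "\<dots> \<approx> Mul (Mul (Sc c) a) d" by (rule mulL, rule e_sym, rule eqU.sc_central)
  also have "\<dots> \<approx> Mul (Sc c) (Mul a d)" by (rule eqU.mul_assoc)
  finally show ?thesis .
qed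

lemma G: assumes "Add g h \<approx> Sc 1" "Mul a h \<approx> a" shows "Mul a g \<approx> Sc 0"
proof (rule cancel)
  have "a \<approx> Mul a (Sc 1)" by (rule e_sym, rule eqU.mul_one_right)
  also have "\<dots> \<approx> Mul a (Add g h)" by (rule mulR, rule e_sym, rule assms(1))
  also have "\<dots> \<approx> Add (Mul a g) (Mul a h)" by (rule eqU.distrib_left)
  also have "\<dots> \<approx> Add (Mul a g) a" by (rule addR, rule assms(2))
  finally show "Add (Mul a g) a \<approx> a" by (rule e_sym)
qed

abbreviation "ee \<equiv> Mul uK uKb"
abbreviation "ff \<equiv> Mul uL uLb"

lemma r7': "Add ff ee \<approx> Sc 1" by (rule e_trans[OF eqU.add_comm eqU.r7])

lemma LKb0: "Mul uL uKb \<approx> Sc 0"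
proof -
  have "Mul uL ff \<approx> Mul uL (Mul uLb uL)" by (rule mulR, rule eqU.r6)
  also have "\<dots> \<approx> Mul ff uL" by (rule e_sym, rule eqU.mul_assoc)
  also have "\<dots> \<approx> uL" by (rule eqU.r4)
  finally have z: "Mul uL ee \<approx> Sc 0" by (rule G[OF eqU.r7])
  have "Mul uL uKb \<approx> Mul uL (Mul (Mul uKb uK) uKb)" by (rule mulR, rule e_sym, rule eqU.r2)
  also have "\<dots> \<approx> Mul uL (Mul ee uKb)" by (rule mulR, rule mulL, rule e_sym, rule eqU.r3)
  also have "\<dots> \<approx> Mul (Mul uL ee) uKb" by (rule e_sym, rule eqU.mul_assoc)
  also have "\<dots> \<approx> Mul (Sc 0) uKb" by (rule mulL, rule z)
  also have "\<dots> \<approx> Sc 0" by (rule mul_zero_l)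
  finally show ?thesis .
qed

lemma LbK0: "Mul uLb uK \<approx> Sc 0"
proof -
  have "Mul uLb ff \<approx> Mul (Mul uLb uL) uLb" by (rule e_sym, rule eqU.mul_assoc)
  also have "\<dots> \<approx> uLb" by (rule eqU.r5)
  finally have z: "Mul uLb ee \<approx> Sc 0" by (rule G[OF eqU.r7])
  have "Mul uLb uK \<approx> Mul uLb (Mul ee uK)" by (rule mulR, rule e_sym, rule eqU.r1)
  also have "\<dots> \<approx> Mul (Mul uLb ee) uK" by (rule e_sym, rule eqU.mul_assoc)
  also have "\<dots> \<approx> Mul (Sc 0) uK" by (rule mulL, rule z)
  also have "\<dots> \<approx> Sc 0" by (rule mul_zero_l)
  finally show ?thesis .
qed

lemma KbL0: "Mul uKb uL \<approx> Sc 0"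
proof -
  have "Mul uKb ee \<approx> Mul (Mul uKb uK) uKb" by (rule e_sym, rule eqU.mul_assoc)
  also have "\<dots> \<approx> uKb" by (rule eqU.r2)
  finally have z: "Mul uKb ff \<approx> Sc 0" by (rule G[OF r7'])
  have "Mul uKb uL \<approx> Mul uKb (Mul ff uL)" by (rule mulR, rule e_sym, rule eqU.r4)
  also have "\<dots> \<approx> Mul (Mul uKb ff) uL" by (rule e_sym, rule eqU.mul_assoc)
  also have "\<dots> \<approx> Mul (Sc 0) uL" by (rule mulL, rule z)
  also have "\<dots> \<approx> Sc 0" by (rule mul_zero_l)
  finally show ?thesis .
qed

lemma KLb0: "Mul uK uLb \<approx> Sc 0"
proof -
  have "Mul uK ee \<approx> Mul uK (Mul uKb uK)" by (rule mulR, rule eqU.r3)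
  also have "\<dots> \<approx> Mul ee uK" by (rule e_sym, rule eqU.mul_assoc)
  also have "\<dots> \<approx> uK" by (rule eqU.r1)
  finally have z: "Mul uK ff \<approx> Sc 0" by (rule G[OF r7'])
  have "Mul uK uLb \<approx> Mul uK (Mul (Mul uLb uL) uLb)" by (rule mulR, rule e_sym, rule eqU.r5)
  also have "\<dots> \<approx> Mul uK (Mul ff uLb)" by (rule mulR, rule mulL, rule e_sym, rule eqU.r6)
  also have "\<dots> \<approx> Mul (Mul uK ff) uLb" by (rule e_sym, rule eqU.mul_assoc)
  also have "\<dots> \<approx> Mul (Sc 0) uLb" by (rule mulL, rule z)
  also have "\<dots> \<approx> Sc 0" by (rule mul_zero_l)
  finally show ?thesis .
qed

lemma two_sum: "x \<approx> a' \<Longrightarrow> y \<approx> b' \<Longrightarrow> Add a' b' \<approx> c \<Longrightarrow> Add x (Add y (Sc 0)) \<approx> c"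
proof -
  assume h: "x \<approx> a'" "y \<approx> b'" "Add a' b' \<approx> c"
  have "Add x (Add y (Sc 0)) \<approx> Add x y" by (rule addR, rule add_zero_r)
  also have "\<dots> \<approx> Add a' b'" by (rule eqU.add_cong, rule h(1), rule h(2))
  also have "\<dots> \<approx> c" by (rule h(3))
  finally show ?thesis .
qed

lemma zz: "Add (Sc 0) (Sc 0) \<approx> Sc 0" by (rule eqU.add_zero)

lemma KbLb_KL: "Mul (Add uKb uLb) (Add uK uL) \<approx> Sc 1"
proof -
  have "Mul (Add uKb uLb) (Add uK uL) \<approx> Add (Mul uKb (Add uK uL)) (Mul uLb (Add uK uL))" by (rule eqU.distrib_right)
  also have "\<dots> \<approx> Add (Add (Mul uKb uK) (Mul uKb uL)) (Add (Mul uLb uK) (Mul uLb uL))"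
    by (rule eqU.add_cong; rule eqU.distrib_left)
  also have "\<dots> \<approx> Add (Add (Mul uKb uK) (Sc 0)) (Add (Sc 0) (Mul uLb uL))"
    by (rule eqU.add_cong; rule eqU.add_cong; (rule e_refl | rule KbL0 | rule LbK0))
  also have "\<dots> \<approx> Add (Mul uKb uK) (Mul uLb uL)"
    by (rule eqU.add_cong, rule add_zero_r, rule eqU.add_zero)
  also have "\<dots> \<approx> Add ee ff" by (rule eqU.add_cong; rule e_sym; (rule eqU.r3 | rule eqU.r6))
  also have "\<dots> \<approx> Sc 1" by (rule eqU.r7)
  finally show ?thesis .
qed

lemma gen_case: "eqU q (conv_id_S (Gen g)) (Sc (eps (Gen g))) \<and> eqU q (conv_S_id (Gen g)) (Sc (eps (Gen g)))"
proof (cases g)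
  case GK then show ?thesis
    apply (simp add: conv_id_S_def conv_S_id_def)
    apply (intro conjI)
     apply (rule two_sum[OF e_refl e_refl eqU.r7])
    apply (rule two_sum[OF e_sym[OF eqU.r3] e_sym[OF eqU.r6] eqU.r7])
    done
next
  case GKb then show ?thesis
    apply (simp add: conv_id_S_def conv_S_id_def)
    apply (intro conjI)
     apply (rule two_sum[OF e_sym[OF eqU.r3] e_sym[OF eqU.r6] eqU.r7])
    apply (rule two_sum[OF e_refl e_refl eqU.r7])
    done
next
  case GL then show ?thesis
    apply (simp add: conv_id_S_def conv_S_id_def)
    apply (intro conjI)
     apply (rule two_sum[OF LKb0 KLb0 zz])
    apply (rule two_sum[OF LbK0 KbL0 zz])
    done
next
  case GLb then show ?thesis
    apply (simp add: conv_id_S_def conv_S_id_def)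
    apply (intro conjI)
     apply (rule two_sum[OF LbK0 KbL0 zz])
    apply (rule two_sum[OF LKb0 KLb0 zz])
    done
next
  case GE
  have a: "Mul (Mul (Sc (-1)) (Mul uE (Add uKb uLb))) (Add uK uL) \<approx> Mul (Sc (-1)) uE"
  proof -
    have "Mul (Mul (Sc (-1)) (Mul uE (Add uKb uLb))) (Add uK uL) \<approx> Mul (Sc (-1)) (Mul (Mul uE (Add uKb uLb)) (Add uK uL))"
      by (rule eqU.mul_assoc)
    also have "\<dots> \<approx> Mul (Sc (-1)) (Mul uE (Mul (Add uKb uLb) (Add uK uL)))" by (rule mulR, rule eqU.mul_assoc)
    also have "\<dots> \<approx> Mul (Sc (-1)) (Mul uE (Sc 1))" by (rule mulR, rule mulR, rule KbLb_KL)
    also have "\<dots> \<approx> Mul (Sc (-1)) uE" by (rule mulR, rule eqU.mul_one_right)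
    finally show ?thesis .
  qed
  from GE show ?thesis
    apply (simp add: conv_id_S_def conv_S_id_def uneg_def smul_def)
    apply (intro conjI)
     apply (rule two_sum[OF eqU.mul_one_left e_refl neg_cancel])
    apply (rule two_sum[OF eqU.mul_one_left a eqU.add_inv])
    done
next
  case GF
  have a: "Mul (Add uKb uLb) (Mul (Sc (-1)) (Mul (Add uK uL) uF)) \<approx> Mul (Sc (-1)) uF"
  proof -
    have "Mul (Add uKb uLb) (Mul (Sc (-1)) (Mul (Add uK uL) uF)) \<approx> Mul (Sc (-1)) (Mul (Add uKb uLb) (Mul (Add uK uL) uF))"
      by (rule sc_pull_r)
    also have "\<dots> \<approx> Mul (Sc (-1)) (Mul (Mul (Add uKb uLb) (Add uK uL)) uF)" by (rule mulR, rule e_sym, rule eqU.mul_assoc)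
    also have "\<dots> \<approx> Mul (Sc (-1)) (Mul (Sc 1) uF)" by (rule mulR, rule mulL, rule KbLb_KL)
    also have "\<dots> \<approx> Mul (Sc (-1)) uF" by (rule mulR, rule eqU.mul_one_left)
    finally show ?thesis .
  qed
  from GF show ?thesis
    apply (simp add: conv_id_S_def conv_S_id_def uneg_def smul_def)
    apply (intro conjI)
     apply (rule two_sum[OF eqU.mul_one_right a eqU.add_inv])
    apply (rule two_sum[OF eqU.mul_one_right e_refl neg_cancel])
    done
qed


lemma cid_alt: "conv_id_S x = usum (map (\<lambda>(a,b). Mul a (antipode b)) (delta x))"
  by (simp add: conv_id_S_def)
lemma csi_alt: "conv_S_id x = usum (map (\<lambda>(a,b). Mul (antipode a) b) (delta x))"
  by (simp add: conv_S_id_def)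
lemma delta_mul: "delta (Mul a b) = concat (map (\<lambda>(x1,y1). map (\<lambda>(x2,y2). (Mul x1 x2, Mul y1 y2)) (delta b)) (delta a))"
  by (simp add: split_def)

lemma usum_concat_map: "usum (concat (map f L)) \<approx> usum (map (\<lambda>z. usum (f z)) L)"
  using usum_concat[of "map f L"] by (simp add: comp_def)

lemma usum_app_map: "usum (map f (xs @ ys)) \<approx> Add (usum (map f xs)) (usum (map f ys))"
  using usum_append[of "map f xs" "map f ys"] by simp

lemma sc_sum: "x \<approx> Sc a \<Longrightarrow> y \<approx> Sc b \<Longrightarrow> Add x y \<approx> Sc (a + b)"
  by (rule e_trans[OF eqU.add_cong eqU.sc_add])

lemma main: "eqU q (conv_id_S x) (Sc (eps x)) \<and> eqU q (conv_S_id x) (Sc (eps x))"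
proof (induction x)
  case (Gen g) then show ?case by (rule gen_case)
next
  case (Sc c) then show ?case
    by (simp add: conv_id_S_def conv_S_id_def e_trans[OF add_zero_r eqU.mul_one_right])
next
  case (Add a b)
  then show ?case
    unfolding cid_alt csi_alt
    by (simp only: delta.simps, intro conjI e_trans[OF usum_app_map] sc_sum eps.simps) (auto simp: cid_alt csi_alt intro: sc_sum)
next
  case (Mul a b)
  let ?Fi = "\<lambda>(a,b). Mul a (antipode b)"
  let ?Fs = "\<lambda>(a,b). Mul (antipode a) b"
  have ia: "usum (map ?Fi (delta a)) \<approx> Sc (eps a)" and ib: "usum (map ?Fi (delta b)) \<approx> Sc (eps b)"
   and sa: "usum (map ?Fs (delta a)) \<approx> Sc (eps a)" and sb: "usum (map ?Fs (delta b)) \<approx> Sc (eps b)"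
    using Mul by (auto simp: cid_alt csi_alt intro: sc_sum)
  have 1: "conv_id_S (Mul a b) \<approx> Sc (eps (Mul a b))"
  proof -
    have "conv_id_S (Mul a b) = usum (concat (map (\<lambda>(x1,y1). map (\<lambda>(x2,y2). Mul (Mul x1 x2) (Mul (antipode y2) (antipode y1))) (delta b)) (delta a)))"
      unfolding cid_alt delta_mul by (simp add: map_concat split_def comp_def)
    also have "\<dots> \<approx> usum (map (\<lambda>(x1,y1). usum (map (\<lambda>(x2,y2). Mul (Mul x1 x2) (Mul (antipode y2) (antipode y1))) (delta b))) (delta a))"
      by (rule e_trans[OF usum_concat_map usum_cong]) (auto split: prod.splits)
    also have "\<dots> \<approx> usum (map (\<lambda>z. Mul (Sc (eps b)) (?Fi z)) (delta a))"
    proof (rule usum_cong)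
      fix z assume "z \<in> set (delta a)"
      obtain x1 y1 where z: "z = (x1, y1)" by fastforce
      have "usum (map (\<lambda>(x2,y2). Mul (Mul x1 x2) (Mul (antipode y2) (antipode y1))) (delta b))
          \<approx> usum (map (\<lambda>w. Mul (Mul x1 (?Fi w)) (antipode y1)) (delta b))"
        by (rule usum_cong, clarsimp, rule assoc4)
      also have "\<dots> \<approx> Mul (Mul x1 (usum (map ?Fi (delta b)))) (antipode y1)" by (rule usum_lin)
      also have "\<dots> \<approx> Mul (Sc (eps b)) (Mul x1 (antipode y1))" by (rule sc_mid, rule ib)
      finally show "(\<lambda>(x1,y1). usum (map (\<lambda>(x2,y2). Mul (Mul x1 x2) (Mul (antipode y2) (antipode y1))) (delta b))) z
          \<approx> Mul (Sc (eps b)) (?Fi z)" by (simp add: z)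
    qed
    also have "\<dots> \<approx> Mul (Sc (eps b)) (usum (map ?Fi (delta a)))" by (rule usum_smul)
    also have "\<dots> \<approx> Mul (Sc (eps b)) (Sc (eps a))" by (rule mulR, rule ia)
    also have "\<dots> \<approx> Sc (eps b * eps a)" by (rule eqU.sc_mul)
    finally show ?thesis by (simp add: mult.commute)
  qed
  define g where "g = (\<lambda>z w. case z of (x1,y1) \<Rightarrow> case w of (x2,y2) \<Rightarrow> Mul (Mul (antipode x2) (antipode x1)) (Mul y1 y2))"
  have 2: "conv_S_id (Mul a b) \<approx> Sc (eps (Mul a b))"
  proof -
    have "conv_S_id (Mul a b) = usum (concat (map (\<lambda>z. map (g z) (delta b)) (delta a)))"
      unfolding csi_alt delta_mul g_def by (simp add: map_concat split_def comp_def)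
    also have "\<dots> \<approx> usum (map (\<lambda>z. usum (map (g z) (delta b))) (delta a))"
      by (rule usum_concat_map)
    also have "\<dots> \<approx> usum (map (\<lambda>w. usum (map (\<lambda>z. g z w) (delta a))) (delta b))" by (rule usum_swap)
    also have "\<dots> \<approx> usum (map (\<lambda>w. Mul (Sc (eps a)) (?Fs w)) (delta b))"
    proof (rule usum_cong)
      fix w assume "w \<in> set (delta b)"
      obtain x2 y2 where w: "w = (x2, y2)" by fastforce
      have "usum (map (\<lambda>z. g z w) (delta a))
          \<approx> usum (map (\<lambda>z. Mul (Mul (antipode x2) (?Fs z)) y2) (delta a))"
        by (rule usum_cong, clarsimp simp: g_def w, rule assoc4)
      also have "\<dots> \<approx> Mul (Mul (antipode x2) (usum (map ?Fs (delta a)))) y2" by (rule usum_lin)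
      also have "\<dots> \<approx> Mul (Sc (eps a)) (Mul (antipode x2) y2)" by (rule sc_mid, rule sa)
      finally show "usum (map (\<lambda>z. g z w) (delta a)) \<approx> Mul (Sc (eps a)) (?Fs w)" by (simp add: w)
    qed
    also have "\<dots> \<approx> Mul (Sc (eps a)) (usum (map ?Fs (delta b)))" by (rule usum_smul)
    also have "\<dots> \<approx> Mul (Sc (eps a)) (Sc (eps b))" by (rule mulR, rule sb)
    also have "\<dots> \<approx> Sc (eps a * eps b)" by (rule eqU.sc_mul)
    finally show ?thesis by simp
  qed
  from 1 2 show ?case by simp
qed

end

theorem proposition10:
  fixes q :: complex
  assumes "q \<noteq> 0" and "q \<noteq> 1" and "q \<noteq> -1"
  shows "\<forall>x. eqU q (conv_id_S x) (Sc (eps x)) \<and> eqU q (conv_S_id x) (Sc (eps x))"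
  using main by blast

end
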